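(* There is a Luzin almost disjoint family (on a countable set) which has no uncountable $3$-near-Luzin subfamily.
   Context: An almost disjoint family is a collection of infinite sets whose pairwise intersections are finite. For an uncountable almost disjoint family $\mathcal A$ on a countable set $W$: $\mathcal A$ is Luzin iff there is an enumeration $\mathcal A=\{a_\alpha:\alpha<\omega_1\}$ such that for every finite $w\subseteq W$ and every $\alpha<\omega_1$ the set $\{\beta<\alpha: a_\alpha\cap a_\beta\subseteq w\}$ is finite. $\mathcal A$ is $3$-near-Luzin iff for all uncountable $\mathcal C_0,\mathcal C_1,\mathcal C_2\subseteq\mathcal A$ the set $\bigcap_{i<3}\bigcup\mathcal C_i$ is infinite. *)

theory Defs
  imports Main "HOL-Library.Countable_Set"
begin

definition omega1 :: "nat set rel" where
  "omega1 = cardSuc natLeq"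

definition almost_disjoint :: "'a set \<Rightarrow> 'a set set \<Rightarrow> bool" where
  "almost_disjoint W A \<longleftrightarrow>
     (\<forall>a\<in>A. a \<subseteq> W \<and> infinite a) \<and> (\<forall>a\<in>A. \<forall>b\<in>A. a \<noteq> b \<longrightarrow> finite (a \<inter> b))"

definition Luzin :: "'a set \<Rightarrow> 'a set set \<Rightarrow> bool" where
  "Luzin W A \<longleftrightarrow> almost_disjoint W A \<and> uncountable A \<and>
     (\<exists>a. bij_betw a (Field omega1) A \<and>
        (\<forall>w. finite w \<and> w \<subseteq> W \<longrightarrow>
           (\<forall>\<alpha>\<in>Field omega1. finite {\<beta> \<in> underS omega1 \<alpha>. a \<alpha> \<inter> a \<beta> \<subseteq> w})))"

definition near_Luzin3 :: "'a set set \<Rightarrow> bool" where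
  "near_Luzin3 A \<longleftrightarrow>
     (\<forall>C0 C1 C2. C0 \<subseteq> A \<and> C1 \<subseteq> A \<and> C2 \<subseteq> A \<and>
        uncountable C0 \<and> uncountable C1 \<and> uncountable C2 \<longrightarrow>
        infinite (\<Union>C0 \<inter> \<Union>C1 \<inter> \<Union>C2))"

end

theory Submission
  imports Defs "HOL-Library.Countable_Set_Type"
begin

unbundle cardinal_syntax



definition pre :: "(nat \<Rightarrow> bool) \<Rightarrow> nat \<Rightarrow> bool list" where
  "pre r n = map r [0..<n]"

lemma pre_length[simp]: "length (pre r n) = n" by (simp add: pre_def)
lemma pre_nth[simp]: "i < n \<Longrightarrow> pre r n ! i = r i" by (simp add: pre_def)
lemma take_pre: "m \<le> n \<Longrightarrow> take m (pre r n) = pre r m"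
  by (simp add: pre_def take_map)
lemma pre_diff: "i < n \<Longrightarrow> r i \<noteq> r' i \<Longrightarrow> pre r n \<noteq> pre r' n"
  by (metis pre_nth)
lemma pre_mono_ne: "pre r n \<noteq> pre r' n \<Longrightarrow> n \<le> m \<Longrightarrow> pre r m \<noteq> pre r' m"
  by (metis take_pre)
lemma pre_inj: "(\<forall>n. pre r n = pre r' n) \<Longrightarrow> r = r'"
proof
  fix i assume "\<forall>n. pre r n = pre r' n"
  hence "pre r (Suc i) ! i = pre r' (Suc i) ! i" by simp
  thus "r i = r' i" by simp
qed

definition avoid :: "(nat \<Rightarrow> nat \<Rightarrow> bool) \<Rightarrow> bool list \<Rightarrow> nat \<Rightarrow> bool \<Rightarrow> bool list" where
  "avoid q s k c = s @ map (\<lambda>j. \<not> q j (length s + j)) [0..<k] @ [c]"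

lemma avoid_length[simp]: "length (avoid q s k c) = length s + k + 1"
  by (simp add: avoid_def)

lemma avoid_prefix: "take (length s) (avoid q s k c) = s"
  by (simp add: avoid_def)

lemma avoid_last: "avoid q s k c ! (length s + k) = c"
  by (simp add: avoid_def nth_append)

lemma avoid_prop:
  assumes "j < k" "length (avoid q s k c) \<le> length v" "take (length (avoid q s k c)) v = avoid q s k c"
  shows "v \<noteq> pre (q j) (length v)"
proof
  assume eq: "v = pre (q j) (length v)"
  let ?i = "length s + j"
  have i1: "?i < length (avoid q s k c)" using assms by simp
  have "v ! ?i = avoid q s k c ! ?i" using assms(3) i1 by (metis nth_take)
  also have "\<dots> = (\<not> q j ?i)" using assms(1) by (simp add: avoid_def nth_append)
  finally have "v ! ?i = (\<not> q j ?i)" .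
  moreover have "v ! ?i = q j ?i" using eq i1 assms(2)
    by (metis order_less_le_trans pre_nth)
  ultimately show False by simp
qed

type_synonym pt = "bool list \<times> bool list"

definition T :: "(nat \<Rightarrow> bool) \<Rightarrow> pt set" where
  "T r = {(u,v). length v = length u \<and> u \<noteq> v \<and> (u = pre r (length u) \<or> v = pre r (length u))}"

definition adense :: "pt set \<Rightarrow> (nat \<Rightarrow> bool) \<Rightarrow> bool" where
  "adense b q \<longleftrightarrow> (\<forall>s N. \<exists>u. N \<le> length u \<and> take (length s) u = s \<and> u \<noteq> pre q (length u)
       \<and> (u, pre q (length u)) \<in> b)"

definition okp :: "pt set \<times> (nat \<Rightarrow> bool) \<Rightarrow> bool" where
  "okp x \<longleftrightarrow> fst x \<subseteq> T (snd x) \<and> adense (fst x) (snd x)"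

definition Good :: "(pt set \<times> (nat \<Rightarrow> bool)) set \<Rightarrow> pt set \<times> (nat \<Rightarrow> bool) \<Rightarrow> bool" where
  "Good P x \<longleftrightarrow> okp x \<and> snd x \<notin> snd ` P \<and> (\<forall>p\<in>P. finite (fst x \<inter> fst p))
     \<and> (\<forall>w. finite w \<longrightarrow> finite {p\<in>P. fst x \<inter> fst p \<subseteq> w})"

definition Lev :: "nat \<Rightarrow> pt set" where
  "Lev M = {(u,v). length u \<le> M \<and> length v \<le> M}"

lemma finite_Lev: "finite (Lev M)"
proof -
  have "Lev M = {xs::bool list. set xs \<subseteq> UNIV \<and> length xs \<le> M} \<times> {xs::bool list. set xs \<subseteq> UNIV \<and> length xs \<le> M}"
    by (auto simp: Lev_def)
  thus ?thesis using finite_lists_length_le[of "UNIV::bool set"] by simp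
qed




lemma exists_good:
  assumes cP: "countable P" and okP: "\<forall>p\<in>P. okp p" and inj: "inj_on snd P"
  shows "\<exists>x. Good P x"
proof -
  define g where "g = from_nat_into P"
  define q where "q j = snd (g j)" for j
  define b where "b j = fst (g j)" for j
  define active where "active k \<longleftrightarrow> P \<noteq> {} \<and> g k \<notin> g ` {..<k}" for k
  define Nb where "Nb k = (\<Sum>j<k. Suc (SOME i. q j i \<noteq> q k i))" for k
  define step where "step k s = (let s' = avoid q s k False in if active k then
     (SOME u. max (Nb k) (Suc (length s')) \<le> length u \<and> take (length s') u = s' \<and> u \<noteq> pre (q k) (length u)
        \<and> (u, pre (q k) (length u)) \<in> b k) else s')" for k s
  define sq where "sq = rec_nat [] step"
  have sq0: "sq 0 = []" by (simp add: sq_def)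
  have sqS: "sq (Suc k) = step k (sq k)" for k by (simp add: sq_def)
  have gP: "P \<noteq> {} \<Longrightarrow> g k \<in> P" for k unfolding g_def by (rule from_nat_into)
  have gsurj: "p \<in> P \<Longrightarrow> \<exists>k. g k = p" for p unfolding g_def using from_nat_into_surj[OF cP] by blast
  have actq: "q j \<noteq> q k" if "active k" "j < k" for j k
  proof
    assume "q j = q k"
    moreover have "g j \<in> P" "g k \<in> P" using that gP active_def by auto
    ultimately have "g j = g k" using inj unfolding q_def inj_on_def by blast
    thus False using that unfolding active_def by (metis imageI lessThan_iff)
  qed
  have Nb_prop: "pre (q j) n \<noteq> pre (q k) n" if "active k" "j < k" "Nb k \<le> n" for j k n
  proof -
    define i where "i = (SOME i. q j i \<noteq> q k i)"
    have "\<exists>i. q j i \<noteq> q k i" using actq[OF that(1,2)] by auto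
    hence qi: "q j i \<noteq> q k i" unfolding i_def by (rule someI_ex)
    have "Suc i \<le> Nb k" unfolding Nb_def i_def
      using member_le_sum[of j "{..<k}" "\<lambda>j. Suc (SOME i. q j i \<noteq> q k i)"] that(2) by simp
    thus ?thesis using pre_diff[of i n "q j" "q k"] qi that(3) by simp
  qed
  have step_prop: "length (avoid q s k False) \<le> length (step k s) \<and>
      take (length (avoid q s k False)) (step k s) = avoid q s k False \<and>
      (active k \<longrightarrow> Nb k \<le> length (step k s) \<and> step k s \<noteq> pre (q k) (length (step k s))
          \<and> (step k s, pre (q k) (length (step k s))) \<in> b k)" for k s
  proof (cases "active k")
    case True
    define s' where "s' = avoid q s k False"
    have "okp (g k)" using okP gP True active_def by auto
    hence "adense (b k) (q k)" unfolding okp_def b_def q_def by simp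
    hence ex: "\<exists>u. max (Nb k) (Suc (length s')) \<le> length u \<and> take (length s') u = s' \<and> u \<noteq> pre (q k) (length u)
        \<and> (u, pre (q k) (length u)) \<in> b k" unfolding adense_def by blast
    have "step k s = (SOME u. max (Nb k) (Suc (length s')) \<le> length u \<and> take (length s') u = s' \<and> u \<noteq> pre (q k) (length u)
        \<and> (u, pre (q k) (length u)) \<in> b k)" unfolding step_def s'_def Let_def using True by simp
    with someI_ex[OF ex] show ?thesis unfolding s'_def[symmetric] by auto
  next
    case False
    thus ?thesis unfolding step_def Let_def by simp
  qed
  have sq_step: "length (sq k) < length (sq (Suc k)) \<and> take (length (sq k)) (sq (Suc k)) = sq k" for k
  proof -
    let ?s' = "avoid q (sq k) k False"
    have 1: "length ?s' \<le> length (sq (Suc k))" "take (length ?s') (sq (Suc k)) = ?s'"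
      using step_prop[of "sq k" k] sqS by auto
    have "take (length (sq k)) (sq (Suc k)) = take (length (sq k)) (take (length ?s') (sq (Suc k)))"
      by simp
    also have "\<dots> = sq k" using 1(2) avoid_prefix by metis
    finally show ?thesis using 1(1) by simp
  qed
  have sq_prefix: "take (length (sq k)) (sq m) = sq k" if "k \<le> m" for k m
    using that
  proof (induction m rule: dec_induct)
    case base then show ?case by simp
  next
    case (step m)
    have "length (sq k) \<le> length (sq m)" using step.IH
      by (metis length_take min.absorb_iff1 nat_le_linear)
    hence "take (length (sq k)) (sq (Suc m)) = take (length (sq k)) (take (length (sq m)) (sq (Suc m)))"
      by simp
    then show ?case using sq_step[of m] step.IH by simp
  qed
  have sq_mono: "k < m \<Longrightarrow> length (sq k) < length (sq m)" for k m
  proof (induction m)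
    case 0 then show ?case by simp
  next
    case (Suc m) then show ?case using sq_step[of m] by (metis less_Suc_eq order.strict_trans)
  qed
  have sq_len: "k \<le> length (sq k)" for k
    by (induction k) (use sq_step in \<open>auto simp: Suc_le_eq intro: le_less_trans\<close>)
  define r where "r i = sq (Suc i) ! i" for i
  have r_sq: "pre r (length (sq k)) = sq k" for k
  proof (rule nth_equalityI)
    show "length (pre r (length (sq k))) = length (sq k)" by simp
    fix i assume "i < length (pre r (length (sq k)))"
    hence i: "i < length (sq k)" by simp
    define m where "m = max k (Suc i)"
    have i2: "i < length (sq (Suc i))" using sq_len[of "Suc i"] by simp
    have "sq (Suc i) ! i = sq m ! i" using sq_prefix[of "Suc i" m] i2 m_def by (metis max.cobounded2 nth_take)
    moreover have "sq k ! i = sq m ! i" using sq_prefix[of k m] i m_def by (metis max.cobounded1 nth_take)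
    ultimately show "pre r (length (sq k)) ! i = sq k ! i" using i r_def by simp
  qed
  have r_pre: "take (length (sq k)) (pre r n) = sq k" if "length (sq k) \<le> n" for k n
    using take_pre[OF that] r_sq by simp
  define e where "e k = (sq (Suc k), pre (q k) (length (sq (Suc k))))" for k
  define D where "D = {(u, pre r (length u)) | u. \<exists>s N. u = avoid q s (length s + N) (\<not> r (2*length s + N))}"
  define a where "a = e ` {k. active k} \<union> D"

  have e_b: "e k \<in> b k \<and> fst (e k) \<noteq> snd (e k)" if "active k" for k
    using step_prop[of "sq k" k] that sqS[of k] unfolding e_def by simp
  have e_T: "e k \<in> T r" if "active k" for k
    using e_b[OF that] r_sq[of "Suc k"] unfolding e_def T_def by auto
  have e_notT: "e k \<notin> T (q j)" if "active k" "j < k" for j k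
  proof -
    let ?s' = "avoid q (sq k) k False"
    let ?u = "sq (Suc k)"
    have 1: "length ?s' \<le> length ?u" "take (length ?s') ?u = ?s'" "Nb k \<le> length ?u"
      using step_prop[of "sq k" k] sqS[of k] that(1) by auto
    have "?u \<noteq> pre (q j) (length ?u)" using avoid_prop[OF that(2) 1(1,2)] .
    moreover have "pre (q k) (length ?u) \<noteq> pre (q j) (length ?u)" using Nb_prop[OF that 1(3)] by metis
    ultimately show ?thesis unfolding e_def T_def by auto
  qed
  have e_inj: "inj e"
  proof
    fix k m assume "e k = e m"
    hence "length (sq (Suc k)) = length (sq (Suc m))" unfolding e_def by simp
    thus "k = m" using sq_mono[of "Suc k" "Suc m"] sq_mono[of "Suc m" "Suc k"]
      by (metis Suc_lessI less_irrefl nat_neq_iff not_less_eq)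
  qed
  have r_ne: "r \<noteq> q j" for j
  proof
    assume rq: "r = q j"
    let ?k = "Suc j"
    let ?s' = "avoid q (sq ?k) ?k False"
    let ?u = "sq (Suc ?k)"
    have 1: "length ?s' \<le> length ?u" "take (length ?s') ?u = ?s'"
      using step_prop[of "sq ?k" ?k] sqS[of ?k] by auto
    have "?u \<noteq> pre (q j) (length ?u)" using avoid_prop[OF _ 1(1,2)] by simp
    moreover have "?u = pre r (length ?u)" using r_sq by simp
    ultimately show False using rq by simp
  qed
  have D_form: "u \<noteq> pre r (length u)" if "u = avoid q s (length s + N) (\<not> r (2*length s + N))" for u s N
  proof
    assume eq: "u = pre r (length u)"
    have i: "2*length s + N < length u" using that by simp
    have "u ! (2*length s + N) = (\<not> r (2*length s + N))" using that avoid_last[of q s "length s + N"]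
      by (simp add: mult_2 add.assoc)
    moreover have "u ! (2*length s + N) = r (2*length s + N)" using eq i by (metis pre_nth)
    ultimately show False by simp
  qed
  have D_T: "D \<subseteq> T r"
    unfolding D_def T_def using D_form by fastforce
  have a_T: "a \<subseteq> T r" unfolding a_def using D_T e_T by blast
  have a_dense: "adense a r" unfolding adense_def
  proof (intro allI)
    fix s N
    define u where "u = avoid q s (length s + N) (\<not> r (2*length s + N))"
    have "(u, pre r (length u)) \<in> a" unfolding a_def D_def u_def by blast
    moreover have "u \<noteq> pre r (length u)" using D_form u_def by blast
    moreover have "N \<le> length u" "take (length s) u = s" unfolding u_def using avoid_prefix by auto
    ultimately show "\<exists>u. N \<le> length u \<and> take (length s) u = s \<and> u \<noteq> pre r (length u) \<and> (u, pre r (length u)) \<in> a"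
      by blast
  qed
  have fin: "finite (a \<inter> b j)" if "g j \<in> P" for j
  proof -
    have bT: "b j \<subseteq> T (q j)" using okP that unfolding okp_def b_def q_def by blast
    obtain i where ri: "r i \<noteq> q j i" using r_ne[of j] by blast
    define M where "M = max (2*j+1) (Suc i)"
    have "a \<inter> b j \<subseteq> e ` {..j} \<union> Lev M"
    proof
      fix x assume x: "x \<in> a \<inter> b j"
      show "x \<in> e ` {..j} \<union> Lev M"
      proof (cases "x \<in> D")
        case False
        then obtain k where k: "active k" "x = e k" using x unfolding a_def by blast
        have "\<not> j < k" using e_notT[OF k(1)] x bT k(2) by blast
        thus ?thesis using k by auto
      next
        case True
        then obtain u s N where u: "x = (u, pre r (length u))" "u = avoid q s (length s + N) (\<not> r (2*length s + N))"
          unfolding D_def by blast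
        show ?thesis
        proof (cases "j < length s + N")
          case True
          have "u \<noteq> pre (q j) (length u)" using avoid_prop[OF True, of q s "\<not> r (2*length s + N)" u] u(2) by simp
          hence "pre r (length u) = pre (q j) (length u)" using x bT u(1) unfolding T_def by auto
          hence "length u < Suc i" using pre_diff[of i "length u" r "q j"] ri by (meson not_less_eq)
          thus ?thesis using u(1) unfolding Lev_def M_def by auto
        next
          case False
          hence "length u \<le> 2*j+1" using u(2) by simp
          thus ?thesis using u(1) unfolding Lev_def M_def by auto
        qed
      qed
    qed
    moreover have "finite (e ` {..j} \<union> Lev M)" using finite_Lev by simp
    ultimately show ?thesis using finite_subset by blast
  qed
  have luz: "finite {p\<in>P. a \<inter> fst p \<subseteq> w}" if "finite w" for w
  proof -
    have "{p\<in>P. a \<inter> fst p \<subseteq> w} \<subseteq> g ` (e -` w)"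
    proof
      fix p assume p: "p \<in> {p\<in>P. a \<inter> fst p \<subseteq> w}"
      then obtain k0 where "g k0 = p" using gsurj by blast
      define k where "k = (LEAST k. g k = p)"
      have gk: "g k = p" unfolding k_def by (rule LeastI, fact)
      have "g k \<notin> g ` {..<k}" unfolding k_def using not_less_Least gk k_def by fastforce
      hence act: "active k" unfolding active_def using p by auto
      have "e k \<in> a" unfolding a_def using act by blast
      moreover have "e k \<in> fst p" using e_b[OF act] gk b_def by blast
      ultimately have "e k \<in> w" using p by blast
      thus "p \<in> g ` (e -` w)" using gk by blast
    qed
    moreover have "finite (e -` w)" using finite_vimageI[OF that e_inj] .
    ultimately show ?thesis using finite_subset by blast
  qed
  have "Good P (a, r)" unfolding Good_def
  proof (intro conjI ballI allI impI)
    show "okp (a, r)" unfolding okp_def using a_T a_dense by simp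
    show "snd (a, r) \<notin> snd ` P"
    proof
      assume "snd (a, r) \<in> snd ` P"
      then obtain p where "p \<in> P" "r = snd p" by auto
      then obtain j where "g j = p" using gsurj by blast
      thus False using r_ne[of j] \<open>r = snd p\<close> q_def by simp
    qed
    fix p assume "p \<in> P"
    then obtain j where j: "g j = p" using gsurj by blast
    show "finite (fst (a, r) \<inter> fst p)" using fin[of j] j \<open>p \<in> P\<close> b_def by simp
  next
    fix w :: "pt set" assume "finite w"
    thus "finite {p \<in> P. fst (a, r) \<inter> fst p \<subseteq> w}" using luz by simp
  qed
  thus ?thesis by blast
qed




lemma split_unc:
  fixes R :: "(nat \<Rightarrow> bool) set"
  assumes "uncountable R"
  shows "\<exists>N R1 R2. R1 \<subseteq> R \<and> R2 \<subseteq> R \<and> uncountable R1 \<and> uncountable R2 \<and> (\<forall>x\<in>R1. \<forall>y\<in>R2. pre x N \<noteq> pre y N)"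
proof (rule ccontr)
  assume H: "\<not> ?thesis"
  define F where "F N s = {x\<in>R. pre x N = s}" for N s
  define X where "X = {x\<in>R. \<forall>N. uncountable (F N (pre x N))}"
  have X1: "x = y" if "x \<in> X" "y \<in> X" for x y
  proof (rule pre_inj, rule allI, rule ccontr)
    fix N assume ne: "pre x N \<noteq> pre y N"
    have "uncountable (F N (pre x N))" "uncountable (F N (pre y N))" using that unfolding X_def by blast+
    moreover have "\<forall>x'\<in>F N (pre x N). \<forall>y'\<in>F N (pre y N). pre x' N \<noteq> pre y' N" using ne F_def by auto
    moreover have "F N (pre x N) \<subseteq> R" "F N (pre y N) \<subseteq> R" using F_def by auto
    ultimately show False using H by blast
  qed
  have cX: "countable X"
  proof (cases "X = {}")
    case False
    then obtain x where "x \<in> X" by blast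
    hence "X \<subseteq> {x}" using X1 by blast
    thus ?thesis using countable_subset by blast
  qed simp
  have cU: "countable (\<Union>N. \<Union>s\<in>{s. countable (F N s)}. F N s)"
  proof (rule countable_UN)
    fix N :: nat
    show "countable (\<Union>s\<in>{s. countable (F N s)}. F N s)"
      by (rule countable_UN) (simp_all add: countableI_type)
  qed simp
  have "R \<subseteq> X \<union> (\<Union>N. \<Union>s\<in>{s. countable (F N s)}. F N s)"
  proof
    fix x assume x: "x \<in> R"
    show "x \<in> X \<union> (\<Union>N. \<Union>s\<in>{s. countable (F N s)}. F N s)"
    proof (cases "x \<in> X")
      case False
      then obtain N where "countable (F N (pre x N))" using x X_def by auto
      moreover have "x \<in> F N (pre x N)" using x F_def by auto
      ultimately show ?thesis by blast
    qed simp
  qed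
  hence "countable R" by (rule countable_subset) (rule countable_Un[OF cX cU])
  thus False using assms by simp
qed

lemma split3:
  fixes R :: "(nat \<Rightarrow> bool) set"
  assumes "uncountable R"
  shows "\<exists>N R0 R1 R2. R0 \<subseteq> R \<and> R1 \<subseteq> R \<and> R2 \<subseteq> R \<and> uncountable R0 \<and> uncountable R1 \<and> uncountable R2 \<and>
     (\<forall>x\<in>R0. \<forall>y\<in>R1. \<forall>z\<in>R2. \<forall>n\<ge>N. pre x n \<noteq> pre y n \<and> pre x n \<noteq> pre z n \<and> pre y n \<noteq> pre z n)"
proof -
  obtain N1 A R2 where 1: "A \<subseteq> R" "R2 \<subseteq> R" "uncountable A" "uncountable R2" "\<forall>x\<in>A. \<forall>y\<in>R2. pre x N1 \<noteq> pre y N1"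
    using split_unc[OF assms] by blast
  obtain N2 R0 R1 where 2: "R0 \<subseteq> A" "R1 \<subseteq> A" "uncountable R0" "uncountable R1" "\<forall>x\<in>R0. \<forall>y\<in>R1. pre x N2 \<noteq> pre y N2"
    using split_unc[OF 1(3)] by blast
  have 3: "\<forall>x\<in>R0. \<forall>y\<in>R1. \<forall>z\<in>R2. \<forall>n\<ge>max N1 N2. pre x n \<noteq> pre y n \<and> pre x n \<noteq> pre z n \<and> pre y n \<noteq> pre z n"
  proof (intro ballI allI impI conjI)
    fix x y z n assume xyz: "x \<in> R0" "y \<in> R1" "z \<in> R2" and n: "max N1 N2 \<le> n"
    have xA: "x \<in> A" "y \<in> A" using xyz 2 by auto
    show "pre x n \<noteq> pre y n" using 2(5) xyz(1,2) n by (meson max.bounded_iff pre_mono_ne)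
    show "pre x n \<noteq> pre z n" using 1(5) xA(1) xyz(3) n by (meson max.bounded_iff pre_mono_ne)
    show "pre y n \<noteq> pre z n" using 1(5) xA(2) xyz(3) n by (meson max.bounded_iff pre_mono_ne)
  qed
  have 4: "R0 \<subseteq> R" "R1 \<subseteq> R" using 1(1) 2(1,2) by auto
  show ?thesis using 1(2,4) 2(3,4) 3 4 by blast
qed





lemma o1_wo: "Well_order omega1"
  unfolding omega1_def by (rule cardSuc_Well_order[OF natLeq_Card_order])

lemma o1_co: "Card_order omega1"
  unfolding omega1_def by (rule cardSuc_Card_order[OF natLeq_Card_order])

lemma o1_countable_underS: "countable (underS omega1 \<alpha>)"
proof (cases "\<alpha> \<in> Field omega1")
  case True
  have "card_of (underS omega1 \<alpha>) <o omega1" using card_of_underS[OF o1_co True] .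
  hence "card_of (underS omega1 \<alpha>) \<le>o natLeq"
    using cardSuc_ordLeq_ordLess[OF natLeq_Card_order card_of_Card_order] unfolding omega1_def by blast
  thus ?thesis using countable_card_le_natLeq by blast
next
  case False
  hence "underS omega1 \<alpha> = {}" unfolding underS_def Field_def by auto
  thus ?thesis by simp
qed

lemma o1_uncountable: "uncountable (Field omega1)"
proof
  assume "countable (Field omega1)"
  hence 1: "card_of (Field omega1) \<le>o natLeq" using countable_card_le_natLeq by blast
  have "card_of (Field omega1) =o omega1" using card_of_Field_ordIso[OF o1_co] .
  hence "omega1 \<le>o natLeq" using 1 ordIso_ordLeq_trans ordIso_symmetric by blast
  moreover have "natLeq <o omega1" unfolding omega1_def by (rule cardSuc_greater[OF natLeq_Card_order])
  ultimately show False using not_ordLess_ordLeq by blast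
qed

lemma o1_total: "\<beta> \<in> Field omega1 \<Longrightarrow> \<gamma> \<in> Field omega1 \<Longrightarrow> \<beta> \<noteq> \<gamma> \<Longrightarrow>
   \<beta> \<in> underS omega1 \<gamma> \<or> \<gamma> \<in> underS omega1 \<beta>"
  using wo_rel.TOTALS[of omega1] o1_wo unfolding wo_rel_def underS_def by blast

lemma underS_Field: "\<beta> \<in> underS omega1 \<alpha> \<Longrightarrow> \<beta> \<in> Field omega1"
  unfolding underS_def Field_def by auto

lemma adense_infinite: "adense b q \<Longrightarrow> infinite b"
proof
  assume d: "adense b q" and f: "finite b"
  obtain M where M: "\<forall>x\<in>b. length (fst x) < M"
    using finite_nat_bounded[OF finite_imageI[OF f, of "\<lambda>x. length (fst x)"]] by auto
  obtain u where "M \<le> length u" "(u, pre q (length u)) \<in> b" using d unfolding adense_def by blast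
  thus False using M by fastforce
qed

definition Hs :: "(nat set \<Rightarrow> pt set \<times> (nat \<Rightarrow> bool)) \<Rightarrow> nat set \<Rightarrow> pt set \<times> (nat \<Rightarrow> bool)" where
  "Hs f \<alpha> = (SOME x. Good (f ` underS omega1 \<alpha>) x)"

definition Fw where "Fw = wo_rel.worec omega1 Hs"

lemma Fw_fix: "Fw \<alpha> = (SOME x. Good (Fw ` underS omega1 \<alpha>) x)"
proof -
  have "wo_rel.adm_wo omega1 Hs"
    unfolding wo_rel.adm_wo_def[OF o1_wo[unfolded wo_rel_def[symmetric]]] Hs_def
  proof (intro allI impI)
    fix f g :: "nat set \<Rightarrow> pt set \<times> (nat \<Rightarrow> bool)" and x
    assume "\<forall>y\<in>underS omega1 x. f y = g y"
    hence "f ` underS omega1 x = g ` underS omega1 x" by (intro image_cong) auto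
    thus "(SOME y. Good (f ` underS omega1 x) y) = (SOME y. Good (g ` underS omega1 x) y)" by simp
  qed
  hence "Fw = Hs Fw" unfolding Fw_def by (rule wo_rel.worec_fixpoint[OF o1_wo[unfolded wo_rel_def[symmetric]]])
  thus ?thesis unfolding Hs_def by (metis)
qed

lemma Fw_good: "Good (Fw ` underS omega1 \<alpha>) (Fw \<alpha>)"
proof (induction \<alpha> rule: wo_rel.well_order_induct[OF o1_wo[unfolded wo_rel_def[symmetric]]])
  case (1 \<alpha>)
  have IH: "Good (Fw ` underS omega1 \<beta>) (Fw \<beta>)" if "\<beta> \<in> underS omega1 \<alpha>" for \<beta>
    using 1 that unfolding underS_def by blast
  let ?P = "Fw ` underS omega1 \<alpha>"
  have "countable ?P" using o1_countable_underS by (rule countable_image)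
  moreover have "\<forall>p\<in>?P. okp p" using IH unfolding Good_def by blast
  moreover have "inj_on snd ?P"
  proof (rule inj_onI, rule ccontr)
    fix x y assume xy: "x \<in> ?P" "y \<in> ?P" "snd x = snd y" "x \<noteq> y"
    then obtain \<beta> \<gamma> where bg: "\<beta> \<in> underS omega1 \<alpha>" "\<gamma> \<in> underS omega1 \<alpha>" "x = Fw \<beta>" "y = Fw \<gamma>" by blast
    hence "\<beta> \<noteq> \<gamma>" using xy by blast
    hence "\<beta> \<in> underS omega1 \<gamma> \<or> \<gamma> \<in> underS omega1 \<beta>" using o1_total underS_Field bg by blast
    thus False
    proof
      assume "\<beta> \<in> underS omega1 \<gamma>"
      hence "snd (Fw \<beta>) \<in> snd ` Fw ` underS omega1 \<gamma>" by blast
      moreover have "snd (Fw \<gamma>) \<notin> snd ` Fw ` underS omega1 \<gamma>" using IH[OF bg(2)] unfolding Good_def by blast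
      ultimately show False using xy(3) bg(3,4) by simp
    next
      assume "\<gamma> \<in> underS omega1 \<beta>"
      hence "snd (Fw \<gamma>) \<in> snd ` Fw ` underS omega1 \<beta>" by blast
      moreover have "snd (Fw \<beta>) \<notin> snd ` Fw ` underS omega1 \<beta>" using IH[OF bg(1)] unfolding Good_def by blast
      ultimately show False using xy(3) bg(3,4) by simp
    qed
  qed
  ultimately have "\<exists>x. Good ?P x" by (rule exists_good)
  hence "Good ?P (SOME x. Good ?P x)" by (rule someI_ex)
  thus ?case using Fw_fix[of \<alpha>] by simp
qed




lemma three_T:
  assumes "x \<in> T r0" "x \<in> T r1" "x \<in> T r2"
    and "\<forall>n\<ge>N. pre r0 n \<noteq> pre r1 n \<and> pre r0 n \<noteq> pre r2 n \<and> pre r1 n \<noteq> pre r2 n"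
  shows "x \<in> Lev N"
proof -
  obtain u v where x: "x = (u, v)" by fastforce
  have h: "length v = length u \<and> (u = pre r (length u) \<or> v = pre r (length u))" if "x \<in> T r" for r
    using that x unfolding T_def by auto
  show ?thesis
  proof (rule ccontr)
    assume "x \<notin> Lev N"
    hence "N \<le> length u" using h[OF assms(1)] x unfolding Lev_def by auto
    hence d: "pre r0 (length u) \<noteq> pre r1 (length u)" "pre r0 (length u) \<noteq> pre r2 (length u)"
        "pre r1 (length u) \<noteq> pre r2 (length u)" using assms(4) by auto
    show False using h[OF assms(1)] h[OF assms(2)] h[OF assms(3)] d by auto
  qed
qed

theorem main_pt: "\<exists>A :: pt set set. Luzin UNIV A \<and> (\<forall>B\<subseteq>A. uncountable B \<longrightarrow>
   (\<exists>C0 C1 C2. C0\<subseteq>B \<and> C1\<subseteq>B \<and> C2\<subseteq>B \<and> uncountable C0 \<and> uncountable C1 \<and> uncountable C2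
      \<and> finite (\<Union>C0 \<inter> \<Union>C1 \<inter> \<Union>C2)))"
proof -
  define a where "a \<alpha> = fst (Fw \<alpha>)" for \<alpha>
  define \<rho> where "\<rho> \<alpha> = snd (Fw \<alpha>)" for \<alpha>
  define A where "A = a ` Field omega1"
  have G: "Good (Fw ` underS omega1 \<alpha>) (Fw \<alpha>)" for \<alpha> by (rule Fw_good)
  have okF: "okp (Fw \<alpha>)" for \<alpha> using G[of \<alpha>] unfolding Good_def by (rule conjunct1)
  have aT: "a \<alpha> \<subseteq> T (\<rho> \<alpha>)" for \<alpha> using okF[of \<alpha>] unfolding okp_def a_def \<rho>_def by (rule conjunct1)
  have ainf: "infinite (a \<alpha>)" for \<alpha>
  proof -
    have "adense (a \<alpha>) (\<rho> \<alpha>)" using okF[of \<alpha>] unfolding okp_def a_def \<rho>_def by (rule conjunct2)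
    thus ?thesis by (rule adense_infinite)
  qed
  have lt: "\<rho> \<alpha> \<noteq> \<rho> \<beta> \<and> finite (a \<alpha> \<inter> a \<beta>)" if "\<beta> \<in> underS omega1 \<alpha>" for \<alpha> \<beta>
  proof
    have "Fw \<beta> \<in> Fw ` underS omega1 \<alpha>" using that by blast
    moreover have "snd (Fw \<alpha>) \<notin> snd ` Fw ` underS omega1 \<alpha>" using G[of \<alpha>] unfolding Good_def by blast
    ultimately show "\<rho> \<alpha> \<noteq> \<rho> \<beta>" unfolding \<rho>_def by force
    have "\<forall>p\<in>Fw ` underS omega1 \<alpha>. finite (fst (Fw \<alpha>) \<inter> fst p)" using G[of \<alpha>] unfolding Good_def by blast
    thus "finite (a \<alpha> \<inter> a \<beta>)" using that unfolding a_def by blast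
  qed
  have ne: "\<rho> \<alpha> \<noteq> \<rho> \<beta> \<and> finite (a \<alpha> \<inter> a \<beta>)"
    if "\<alpha> \<in> Field omega1" "\<beta> \<in> Field omega1" "\<alpha> \<noteq> \<beta>" for \<alpha> \<beta>
  proof -
    have "\<beta> \<in> underS omega1 \<alpha> \<or> \<alpha> \<in> underS omega1 \<beta>" using o1_total that by blast
    thus ?thesis using lt[of \<beta> \<alpha>] lt[of \<alpha> \<beta>] by (metis Int_commute)
  qed
  have a_inj: "inj_on a (Field omega1)"
  proof (rule inj_onI, rule ccontr)
    fix \<alpha> \<beta> assume h: "\<alpha> \<in> Field omega1" "\<beta> \<in> Field omega1" "a \<alpha> = a \<beta>" "\<alpha> \<noteq> \<beta>"
    hence "finite (a \<alpha> \<inter> a \<beta>)" using ne by blast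
    thus False using ainf[of \<alpha>] h(3) by simp
  qed
  have r_inj: "inj_on \<rho> (Field omega1)" using ne by (meson inj_onI)
  have Fw_inj: "inj_on Fw (Field omega1)" using r_inj unfolding inj_on_def \<rho>_def by metis
  have luz: "Luzin UNIV A" unfolding Luzin_def almost_disjoint_def
  proof (intro conjI)
    show "\<forall>x\<in>A. x \<subseteq> UNIV \<and> infinite x" unfolding A_def using ainf by blast
    show "\<forall>x\<in>A. \<forall>y\<in>A. x \<noteq> y \<longrightarrow> finite (x \<inter> y)" unfolding A_def using ne by blast
    show "uncountable A"
    proof
      assume "countable A"
      hence "countable (Field omega1)" unfolding A_def by (rule countable_image_inj_on[OF _ a_inj])
      thus False using o1_uncountable by blast
    qed
    show "\<exists>a. bij_betw a (Field omega1) A \<and> (\<forall>w. finite w \<and> w \<subseteq> UNIV \<longrightarrow>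
           (\<forall>\<alpha>\<in>Field omega1. finite {\<beta> \<in> underS omega1 \<alpha>. a \<alpha> \<inter> a \<beta> \<subseteq> w}))"
    proof (intro exI conjI allI impI ballI)
      show "bij_betw a (Field omega1) A" unfolding bij_betw_def A_def using a_inj by blast
      fix w :: "pt set" and \<alpha> assume w: "finite w \<and> w \<subseteq> UNIV" and al: "\<alpha> \<in> Field omega1"
      let ?S = "{\<beta> \<in> underS omega1 \<alpha>. a \<alpha> \<inter> a \<beta> \<subseteq> w}"
      have "Fw ` ?S \<subseteq> {p \<in> Fw ` underS omega1 \<alpha>. fst (Fw \<alpha>) \<inter> fst p \<subseteq> w}" unfolding a_def by blast
      moreover have "finite {p \<in> Fw ` underS omega1 \<alpha>. fst (Fw \<alpha>) \<inter> fst p \<subseteq> w}"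
        using G[of \<alpha>] w unfolding Good_def by blast
      ultimately have "finite (Fw ` ?S)" by (rule finite_subset)
      moreover have "inj_on Fw ?S" by (rule inj_on_subset[OF Fw_inj]) (auto intro: underS_Field)
      ultimately show "finite ?S" by (rule finite_imageD)
    qed
  qed
  have nn: "\<exists>C0 C1 C2. C0\<subseteq>B \<and> C1\<subseteq>B \<and> C2\<subseteq>B \<and> uncountable C0 \<and> uncountable C1 \<and> uncountable C2
      \<and> finite (\<Union>C0 \<inter> \<Union>C1 \<inter> \<Union>C2)" if B: "B \<subseteq> A" "uncountable B" for B
  proof -
    define I where "I = {\<alpha> \<in> Field omega1. a \<alpha> \<in> B}"
    have IF: "I \<subseteq> Field omega1" unfolding I_def by blast
    have BI: "B = a ` I" using B(1) unfolding I_def A_def by blast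
    have uI: "uncountable I" using B(2) BI countable_image by blast
    have uR: "uncountable (\<rho> ` I)"
      using uI countable_image_inj_on[OF _ inj_on_subset[OF r_inj IF]] by blast
    obtain N R0 R1 R2 where R: "R0 \<subseteq> \<rho> ` I" "R1 \<subseteq> \<rho> ` I" "R2 \<subseteq> \<rho> ` I"
       "uncountable R0" "uncountable R1" "uncountable R2"
       "\<forall>x\<in>R0. \<forall>y\<in>R1. \<forall>z\<in>R2. \<forall>n\<ge>N. pre x n \<noteq> pre y n \<and> pre x n \<noteq> pre z n \<and> pre y n \<noteq> pre z n"
      using split3[OF uR] by (elim exE conjE) (rule that, assumption+)
    define J where "J R = {\<alpha>\<in>I. \<rho> \<alpha> \<in> R}" for R
    have uJ: "uncountable (J R)" if "R \<subseteq> \<rho> ` I" "uncountable R" for R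
    proof -
      have "\<rho> ` J R = R" using that(1) unfolding J_def by blast
      thus ?thesis using that(2) countable_image by metis
    qed
    have uC: "uncountable (a ` J R)" if "R \<subseteq> \<rho> ` I" "uncountable R" for R
    proof
      assume "countable (a ` J R)"
      moreover have "inj_on a (J R)" by (rule inj_on_subset[OF a_inj]) (use IF in \<open>auto simp: J_def\<close>)
      ultimately have "countable (J R)" by (rule countable_image_inj_on)
      thus False using uJ[OF that] by simp
    qed
    have sub: "a ` J R \<subseteq> B" for R using BI unfolding J_def by auto
    have "\<Union>(a ` J R0) \<inter> \<Union>(a ` J R1) \<inter> \<Union>(a ` J R2) \<subseteq> Lev N"
    proof
      fix x assume x: "x \<in> \<Union>(a ` J R0) \<inter> \<Union>(a ` J R1) \<inter> \<Union>(a ` J R2)"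
      obtain \<alpha>0 where h0: "\<alpha>0 \<in> J R0" "x \<in> a \<alpha>0" using x by auto
      obtain \<alpha>1 where h1: "\<alpha>1 \<in> J R1" "x \<in> a \<alpha>1" using x by auto
      obtain \<alpha>2 where h2: "\<alpha>2 \<in> J R2" "x \<in> a \<alpha>2" using x by auto
      note h = h0(1) h1(1) h2(1) h0(2) h1(2) h2(2)
      have "\<rho> \<alpha>0 \<in> R0" "\<rho> \<alpha>1 \<in> R1" "\<rho> \<alpha>2 \<in> R2" using h unfolding J_def by auto
      hence "\<forall>n\<ge>N. pre (\<rho> \<alpha>0) n \<noteq> pre (\<rho> \<alpha>1) n \<and> pre (\<rho> \<alpha>0) n \<noteq> pre (\<rho> \<alpha>2) n \<and> pre (\<rho> \<alpha>1) n \<noteq> pre (\<rho> \<alpha>2) n"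
        using R(7) by simp
      moreover have "x \<in> T (\<rho> \<alpha>0)" "x \<in> T (\<rho> \<alpha>1)" "x \<in> T (\<rho> \<alpha>2)" using h(4-6) aT by (auto dest: subsetD)
      ultimately show "x \<in> Lev N" by (intro three_T[of x "\<rho> \<alpha>0" "\<rho> \<alpha>1" "\<rho> \<alpha>2" N]) simp_all
    qed
    hence "finite (\<Union>(a ` J R0) \<inter> \<Union>(a ` J R1) \<inter> \<Union>(a ` J R2))" using finite_Lev by (rule finite_subset)
    moreover have "uncountable (a ` J R0)" "uncountable (a ` J R1)" "uncountable (a ` J R2)"
      using uC R(1-6) by auto
    ultimately show ?thesis using sub[of R0] sub[of R1] sub[of R2] by (intro exI[of _ "a ` J R0"] exI[of _ "a ` J R1"] exI[of _ "a ` J R2"]) simp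
  qed
  show ?thesis using luz nn by blast
qed




theorem theorem5p9:
  shows "\<exists>(W :: nat set) A. countable W \<and> Luzin W A \<and>
           \<not> (\<exists>B \<subseteq> A. uncountable B \<and> near_Luzin3 B)"
proof -
  obtain A :: "pt set set" where luz: "Luzin UNIV A" and nn: "\<forall>B\<subseteq>A. uncountable B \<longrightarrow>
   (\<exists>C0 C1 C2. C0\<subseteq>B \<and> C1\<subseteq>B \<and> C2\<subseteq>B \<and> uncountable C0 \<and> uncountable C1 \<and> uncountable C2
      \<and> finite (\<Union>C0 \<inter> \<Union>C1 \<inter> \<Union>C2))"
    using main_pt by (elim exE conjE) (rule that, assumption+)
  define h :: "pt \<Rightarrow> nat" where "h = to_nat"
  have hinj: "inj h" unfolding h_def by (rule inj_to_nat)
  define W where "W = range h"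
  define A' where "A' = (\<lambda>a. h ` a) ` A"
  have Iinj: "inj_on (\<lambda>a. h ` a) X" for X :: "pt set set"
    by (rule inj_onI) (simp add: inj_image_eq_iff[OF hinj])
  have hInt: "h ` a \<inter> h ` b = h ` (a \<inter> b)" for a b by (rule image_Int[OF hinj, symmetric])
  have ad: "almost_disjoint UNIV A" and uA: "uncountable A" using luz unfolding Luzin_def by blast+
  obtain en where en: "bij_betw en (Field omega1) A" and
    cond: "\<forall>w. finite w \<and> w \<subseteq> UNIV \<longrightarrow>
           (\<forall>\<alpha>\<in>Field omega1. finite {\<beta> \<in> underS omega1 \<alpha>. en \<alpha> \<inter> en \<beta> \<subseteq> w})"
    using luz unfolding Luzin_def by (elim exE conjE) (rule that, assumption+)
  have luz': "Luzin W A'" unfolding Luzin_def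
  proof (intro conjI)
    show "almost_disjoint W A'" unfolding almost_disjoint_def
    proof (intro conjI ballI impI)
      fix x assume "x \<in> A'"
      then obtain a where a: "a \<in> A" "x = h ` a" unfolding A'_def by blast
      show "x \<subseteq> W" using a W_def by blast
      have "infinite a" using ad a unfolding almost_disjoint_def by blast
      thus "infinite x" using a finite_imageD[of h a] hinj by (metis inj_on_subset subset_UNIV)
    next
      fix x y assume "x \<in> A'" "y \<in> A'" "x \<noteq> y"
      then obtain a b where ab: "a \<in> A" "x = h ` a" "b \<in> A" "y = h ` b" unfolding A'_def by blast
      hence "a \<noteq> b" using \<open>x \<noteq> y\<close> by blast
      hence "finite (a \<inter> b)" using ad ab unfolding almost_disjoint_def by blast
      thus "finite (x \<inter> y)" using ab hInt by simp
    qed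
    show "uncountable A'"
    proof
      assume "countable A'"
      hence "countable A" unfolding A'_def by (rule countable_image_inj_on[OF _ Iinj])
      thus False using uA by simp
    qed
    show "\<exists>a. bij_betw a (Field omega1) A' \<and> (\<forall>w. finite w \<and> w \<subseteq> W \<longrightarrow>
           (\<forall>\<alpha>\<in>Field omega1. finite {\<beta> \<in> underS omega1 \<alpha>. a \<alpha> \<inter> a \<beta> \<subseteq> w}))"
    proof (intro exI conjI allI impI ballI)
      have "bij_betw (\<lambda>a. h ` a) A A'" unfolding A'_def by (rule inj_on_imp_bij_betw[OF Iinj])
      thus "bij_betw (\<lambda>\<alpha>. h ` en \<alpha>) (Field omega1) A'" using bij_betw_trans[OF en] by (simp add: comp_def)
      fix w \<alpha> assume w: "finite w \<and> w \<subseteq> W" and al: "\<alpha> \<in> Field omega1"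
      have "finite (h -` w)" using w finite_vimageI hinj by blast
      hence "finite {\<beta> \<in> underS omega1 \<alpha>. en \<alpha> \<inter> en \<beta> \<subseteq> h -` w}" using cond al by blast
      moreover have "{\<beta> \<in> underS omega1 \<alpha>. h ` en \<alpha> \<inter> h ` en \<beta> \<subseteq> w} = {\<beta> \<in> underS omega1 \<alpha>. en \<alpha> \<inter> en \<beta> \<subseteq> h -` w}"
        using hInt by (auto simp: image_subset_iff_subset_vimage)
      ultimately show "finite {\<beta> \<in> underS omega1 \<alpha>. h ` en \<alpha> \<inter> h ` en \<beta> \<subseteq> w}" by simp
    qed
  qed
  have nn': "\<not> (\<exists>B \<subseteq> A'. uncountable B \<and> near_Luzin3 B)"
  proof
    assume "\<exists>B \<subseteq> A'. uncountable B \<and> near_Luzin3 B"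
    then obtain B' where B': "B' \<subseteq> A'" "uncountable B'" "near_Luzin3 B'" by blast
    define B where "B = {a\<in>A. h ` a \<in> B'}"
    have BB: "B' = (\<lambda>a. h ` a) ` B" using B'(1) unfolding B_def A'_def by blast
    have uB: "uncountable B" using B'(2) BB countable_image by blast
    have "B \<subseteq> A" unfolding B_def by blast
    then obtain C0 C1 C2 where C: "C0\<subseteq>B" "C1\<subseteq>B" "C2\<subseteq>B" "uncountable C0" "uncountable C1" "uncountable C2"
      "finite (\<Union>C0 \<inter> \<Union>C1 \<inter> \<Union>C2)" using nn[rule_format, OF \<open>B \<subseteq> A\<close> uB] by (elim exE conjE) (rule that, assumption+)
    have uC: "uncountable ((\<lambda>a. h ` a) ` C)" if "uncountable C" for C
    proof
      assume "countable ((\<lambda>a. h ` a) ` C)"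
      hence "countable C" by (rule countable_image_inj_on[OF _ Iinj])
      thus False using that by simp
    qed
    have sub: "(\<lambda>a. h ` a) ` C \<subseteq> B'" if "C \<subseteq> B" for C using that BB by blast
    have "infinite (\<Union>((\<lambda>a. h ` a) ` C0) \<inter> \<Union>((\<lambda>a. h ` a) ` C1) \<inter> \<Union>((\<lambda>a. h ` a) ` C2))"
      using B'(3) sub[OF C(1)] sub[OF C(2)] sub[OF C(3)] uC[OF C(4)] uC[OF C(5)] uC[OF C(6)]
      unfolding near_Luzin3_def by blast
    moreover have "\<Union>((\<lambda>a. h ` a) ` C) = h ` \<Union>C" for C by blast
    ultimately have "infinite (h ` \<Union>C0 \<inter> h ` \<Union>C1 \<inter> h ` \<Union>C2)" by simp
    moreover have "h ` \<Union>C0 \<inter> h ` \<Union>C1 \<inter> h ` \<Union>C2 = h ` (\<Union>C0 \<inter> \<Union>C1 \<inter> \<Union>C2)" using hInt by simp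
    ultimately show False using C(7) by simp
  qed
  show ?thesis
    using luz' nn' by (intro exI[of _ W] exI[of _ A']) simp
qed



end
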